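(* Let $X=(X_1,\dots,X_n)$ be a random vector in $\mathcal{X}^n$ whose distribution is exchangeable, let $T:\mathcal{X}^n\to\mathbb{R}$ be a fixed (measurable) function, and let $q$ be any probability distribution on $\mathcal{S}_n$. Define $$\bar P=\sum_{\sigma,\sigma_0\in\mathcal{S}_n}q(\sigma)\,q(\sigma_0)\,\mathbf{1}\{T(X_{\sigma\circ\sigma_0^{-1}})\ge T(X)\}.$$ Then $\mathbb{P}\{\bar P\le\alpha\}\le2\alpha$ for all $\alpha\in[0,1]$.
   Context: $\mathcal{S}_n$ denotes the set (group) of all permutations of $[n]=\{1,\dots,n\}$. For $x\in\mathcal{X}^n$ and $\sigma\in\mathcal{S}_n$, $x_\sigma:=(x_{\sigma(1)},\dots,x_{\sigma(n)})$. $X$ is exchangeable means $X\stackrel{d}{=}X_\pi$ for every fixed $\pi\in\mathcal{S}_n$. $q(\sigma)$ denotes the probability that $q$ assigns to $\sigma$. *)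

theory Defs
  imports "HOL-Probability.Probability" "HOL-Combinatorics.Permutations"
begin

text \<open>The index set [n] is modelled by a finite type 'n; a point of X^n is a
function 'n => 'x; for sigma a permutation, x_sigma = x o sigma, i.e.
x_sigma(i) = x(sigma(i)).\<close>

definition perm_set :: "('n::finite \<Rightarrow> 'n) set" where
  "perm_set = {\<sigma>. \<sigma> permutes (UNIV :: 'n set)}"

definition permute_vec :: "('n \<Rightarrow> 'x) \<Rightarrow> ('n \<Rightarrow> 'n) \<Rightarrow> ('n \<Rightarrow> 'x)" where
  "permute_vec x \<sigma> = (\<lambda>i. x (\<sigma> i))"

definition exchangeable ::
  "'a measure \<Rightarrow> 'x measure \<Rightarrow> ('a \<Rightarrow> ('n::finite \<Rightarrow> 'x)) \<Rightarrow> bool" where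
  "exchangeable M N X \<longleftrightarrow>
     (\<forall>\<pi>\<in>perm_set. distr M (PiM UNIV (\<lambda>_. N)) (\<lambda>\<omega>. permute_vec (X \<omega>) \<pi>)
                    = distr M (PiM UNIV (\<lambda>_. N)) X)"

definition Pbar :: "(('n::finite) \<Rightarrow> 'n) pmf \<Rightarrow> (('n \<Rightarrow> 'x) \<Rightarrow> real) \<Rightarrow> ('n \<Rightarrow> 'x) \<Rightarrow> real" where
  "Pbar q T x = (\<Sum>\<sigma>\<in>perm_set. \<Sum>\<sigma>\<^sub>0\<in>perm_set.
      pmf q \<sigma> * pmf q \<sigma>\<^sub>0 *
      (if T (permute_vec x (\<sigma> \<circ> inv \<sigma>\<^sub>0)) \<ge> T x then 1 else 0))"

end

theory Submission
  imports Defs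
begin

lemma lemG:
  fixes w y :: "'b \<Rightarrow> real" and m :: real
  assumes "finite J" "\<forall>i\<in>J. w i \<ge> 0" "\<forall>i\<in>J. sum w {j\<in>J. y j \<le> y i} \<le> y i"
  shows "(\<Sum>i\<in>J. w i * (m - y i)) \<le> m * sum w J - (sum w J)^2/2"
  using assms
proof (induction "card J" arbitrary: J)
  case 0
  then show ?case by simp
next
  case (Suc n)
  then have ne: "J \<noteq> {}" by auto
  define k where "k = (SOME k. k \<in> J \<and> y k = Max (y ` J))"
  have "\<exists>k. k \<in> J \<and> y k = Max (y ` J)"
  proof -
    have "Max (y ` J) \<in> y ` J" using Max_in[of "y ` J"] Suc.prems ne by auto
    then show ?thesis by force
  qed
  then have k: "k \<in> J" "y k = Max (y ` J)" unfolding k_def by (metis (mono_tags, lifting) someI_ex)+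
  have kmax: "\<forall>i\<in>J. y i \<le> y k" using k Suc.prems by simp
  define J' where "J' = J - {k}"
  have fJ': "finite J'" "card J' = n" using Suc k unfolding J'_def by auto
  have c': "\<forall>i\<in>J'. sum w {j\<in>J'. y j \<le> y i} \<le> y i"
  proof
    fix i assume i: "i \<in> J'"
    have "sum w {j\<in>J'. y j \<le> y i} \<le> sum w {j\<in>J. y j \<le> y i}"
      by (rule sum_mono2) (use Suc.prems J'_def in auto)
    also have "\<dots> \<le> y i" using Suc.prems i J'_def by auto
    finally show "sum w {j\<in>J'. y j \<le> y i} \<le> y i" .
  qed
  have IH: "(\<Sum>i\<in>J'. w i * (m - y i)) \<le> m * sum w J' - (sum w J')^2/2"
    using Suc.hyps(1)[OF fJ'(2)[symmetric] fJ'(1)] Suc.prems c' J'_def by auto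
  have WJ: "sum w J = w k + sum w J'" using Suc.prems k J'_def by (simp add: sum.remove)
  have SJ: "(\<Sum>i\<in>J. w i * (m - y i)) = w k * (m - y k) + (\<Sum>i\<in>J'. w i * (m - y i))"
    using Suc.prems k J'_def by (simp add: sum.remove)
  have "{j\<in>J. y j \<le> y k} = J" using kmax by auto
  then have Wk: "sum w J \<le> y k" using Suc.prems k by metis
  have wk: "w k \<ge> 0" using Suc.prems k by auto
  have "w k * sum w J \<le> w k * y k" using Wk wk by (simp add: mult_left_mono)
  then have A1: "w k * w k + w k * sum w J' \<le> w k * y k" using WJ by (simp add: algebra_simps)
  have A2: "(sum w J)^2 = w k * w k + 2 * (w k * sum w J') + sum w J' * sum w J'"
    using WJ by (simp add: power2_eq_square algebra_simps)
  have A3: "(sum w J')^2 = sum w J' * sum w J'" by (simp add: power2_eq_square)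
  have A4: "w k * (m - y k) = m * w k - w k * y k" by (simp add: algebra_simps)
  have A5: "m * sum w J = m * w k + m * sum w J'" using WJ by (simp add: algebra_simps)
  have A6: "0 \<le> w k * w k" by simp
  show ?case unfolding SJ A2 A4 A5 using IH[unfolded A3] A1 by (simp add: field_simps) (use A6 in linarith)
qed

lemma lemR:
  fixes w s :: "'b \<Rightarrow> real" and m :: real
  assumes "finite I" "\<forall>i\<in>I. w i \<ge> 0"
  shows "(\<Sum>i\<in>I. w i * max 0 (m - (\<Sum>j\<in>I. w j * (if s i \<le> s j then 1 else 0)))) \<le> m^2/2"
proof -
  define P where "P i = sum w {j\<in>I. s i \<le> s j}" for i
  have Pe: "(\<Sum>j\<in>I. w j * (if s i \<le> s j then 1 else 0)) = P i" for i
    unfolding P_def using assms(1) by (simp add: sum.inter_filter if_distrib cong: if_cong)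
  define J where "J = {i\<in>I. P i < m}"
  have fJ: "finite J" using assms J_def by auto
  have "(\<Sum>i\<in>I. w i * max 0 (m - P i)) = (\<Sum>i\<in>J. w i * (m - P i))"
    unfolding J_def using assms(1)
    by (simp add: sum.inter_filter) (rule sum.cong, auto)
  also have "\<dots> \<le> m * sum w J - (sum w J)^2/2"
  proof (rule lemG[OF fJ])
    show "\<forall>i\<in>J. 0 \<le> w i" using assms J_def by auto
    show "\<forall>i\<in>J. sum w {j \<in> J. P j \<le> P i} \<le> P i"
    proof
      fix i assume iJ: "i \<in> J"
      have "sum w {j \<in> J. P j \<le> P i} \<le> sum w {j \<in> I. P j \<le> P i}"
        by (rule sum_mono2) (use assms J_def in auto)
      also have "\<dots> = sum w {j \<in> I. P j \<le> P i \<and> s i \<le> s j} + sum w {j \<in> I. P j \<le> P i \<and> \<not> s i \<le> s j}"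
        by (subst sum.union_disjoint[symmetric]) (use assms in \<open>auto intro: sum.cong\<close>)
      also have "sum w {j \<in> I. P j \<le> P i \<and> \<not> s i \<le> s j} = 0"
      proof (rule sum.neutral, safe)
        fix j assume j: "j \<in> I" "P j \<le> P i" "\<not> s i \<le> s j"
        have sub: "insert j {l\<in>I. s i \<le> s l} \<subseteq> {l\<in>I. s j \<le> s l}" using j by auto
        have "sum w (insert j {l\<in>I. s i \<le> s l}) \<le> P j"
          unfolding P_def by (rule sum_mono2) (use assms sub in auto)
        moreover have "sum w (insert j {l\<in>I. s i \<le> s l}) = w j + P i"
          unfolding P_def using assms j by (subst sum.insert) auto
        ultimately show "w j = 0" using j assms by force
      qed
      also have "sum w {j \<in> I. P j \<le> P i \<and> s i \<le> s j} \<le> P i"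
        unfolding P_def by (rule sum_mono2) (use assms in auto)
      finally show "sum w {j \<in> J. P j \<le> P i} \<le> P i" by simp
    qed
  qed
  also have "\<dots> \<le> m^2/2"
  proof -
    have "0 \<le> (m - sum w J)^2" by simp
    then show ?thesis by (simp add: power2_eq_square algebra_simps)
  qed
  finally show ?thesis using Pe by simp
qed


lemma bij_rcomp:
  assumes "\<sigma> \<in> perm_set"
  shows "bij_betw (\<lambda>\<rho>. \<rho> \<circ> inv \<sigma>) (perm_set :: ('n::finite \<Rightarrow> 'n) set) perm_set"
proof (rule bij_betw_byWitness[where f' = "\<lambda>\<rho>. \<rho> \<circ> \<sigma>"])
  have p: "\<sigma> permutes UNIV" using assms unfolding perm_set_def by simp
  show "\<forall>a\<in>perm_set. a \<circ> inv \<sigma> \<circ> \<sigma> = a" using permutes_inv_o(2)[OF p] by (simp add: o_assoc[symmetric])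
  show "\<forall>a'\<in>perm_set. a' \<circ> \<sigma> \<circ> inv \<sigma> = a'" using permutes_inv_o(1)[OF p] by (simp add: o_assoc[symmetric])
  show "(\<lambda>\<rho>. \<rho> \<circ> inv \<sigma>) ` perm_set \<subseteq> perm_set"
    using permutes_compose[OF permutes_inv[OF p]] unfolding perm_set_def by auto
  show "(\<lambda>\<rho>. \<rho> \<circ> \<sigma>) ` perm_set \<subseteq> perm_set"
    using permutes_compose[OF p] unfolding perm_set_def by auto
qed

lemma lemD:
  fixes q :: "('n::finite \<Rightarrow> 'n) pmf" and t :: "('n \<Rightarrow> 'n) \<Rightarrow> real" and \<alpha> :: real
  assumes sq: "set_pmf q \<subseteq> perm_set" and a0: "0 \<le> \<alpha>"
  shows "real (card {\<pi>\<in>perm_set. (\<Sum>\<sigma>\<in>perm_set. \<Sum>\<sigma>\<^sub>0\<in>perm_set. pmf q \<sigma> * pmf q \<sigma>\<^sub>0 *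
            (if t (\<pi> \<circ> (\<sigma> \<circ> inv \<sigma>\<^sub>0)) \<ge> t \<pi> then 1 else 0)) \<le> \<alpha>})
         \<le> 2 * \<alpha> * real (card (perm_set :: ('n \<Rightarrow> 'n) set))"
proof -
  define S where "S = (perm_set :: ('n \<Rightarrow> 'n) set)"
  have fS: "finite S" by (rule finite_subset[OF subset_UNIV]) simp
  have idS: "id \<in> S" unfolding S_def perm_set_def by (simp add: permutes_id)
  define N where "N = real (card S)"
  have "card S > 0" using fS idS by (auto simp: card_gt_0_iff)
  then have Npos: "N > 0" unfolding N_def by simp
  have sqS: "set_pmf q \<subseteq> S" using sq unfolding S_def .
  have qsum: "(\<Sum>\<sigma>\<in>S. pmf q \<sigma>) = 1" by (rule sum_pmf_eq_1[OF fS sqS])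
  define p where "p \<pi> \<sigma> = (\<Sum>\<sigma>\<^sub>0\<in>S. pmf q \<sigma>\<^sub>0 * (if t (\<pi> \<circ> (\<sigma> \<circ> inv \<sigma>\<^sub>0)) \<ge> t \<pi> then 1 else 0))" for \<pi> \<sigma>
  define F where "F \<pi> = (\<Sum>\<sigma>\<in>S. pmf q \<sigma> * p \<pi> \<sigma>)" for \<pi>
  have Feq: "(\<Sum>\<sigma>\<in>perm_set. \<Sum>\<sigma>\<^sub>0\<in>perm_set. pmf q \<sigma> * pmf q \<sigma>\<^sub>0 *
            (if t (\<pi> \<circ> (\<sigma> \<circ> inv \<sigma>\<^sub>0)) \<ge> t \<pi> then 1 else 0)) = F \<pi>" for \<pi>
    unfolding F_def p_def S_def by (simp add: sum_distrib_left mult.assoc)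
  define A where "A = {\<pi>\<in>S. F \<pi> \<le> \<alpha>}"
  have fA: "finite A" "A \<subseteq> S" using fS A_def by auto
  define m where "m = real (card A) / N"
  have key1: "(\<Sum>\<sigma>\<in>S. pmf q \<sigma> * max 0 (m - p (\<rho> \<circ> inv \<sigma>) \<sigma>)) \<le> m^2/2" if \<rho>S: "\<rho> \<in> S" for \<rho>
  proof -
    define s where "s c = t (\<rho> \<circ> inv c)" for c
    have "p (\<rho> \<circ> inv \<sigma>) \<sigma> = (\<Sum>j\<in>S. pmf q j * (if s \<sigma> \<le> s j then 1 else 0))" if "\<sigma> \<in> S" for \<sigma>
    proof -
      have p: "\<sigma> permutes UNIV" using that unfolding S_def perm_set_def by simp
      have e: "\<rho> \<circ> inv \<sigma> \<circ> (\<sigma> \<circ> inv j) = \<rho> \<circ> inv j" for j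
      proof -
        have "\<rho> \<circ> inv \<sigma> \<circ> (\<sigma> \<circ> inv j) = \<rho> \<circ> (inv \<sigma> \<circ> \<sigma>) \<circ> inv j" by (simp add: comp_assoc)
        then show ?thesis using permutes_inv_o(2)[OF p] by simp
      qed
      show ?thesis unfolding p_def s_def by (simp add: e)
    qed
    then have "(\<Sum>\<sigma>\<in>S. pmf q \<sigma> * max 0 (m - p (\<rho> \<circ> inv \<sigma>) \<sigma>))
       = (\<Sum>\<sigma>\<in>S. pmf q \<sigma> * max 0 (m - (\<Sum>j\<in>S. pmf q j * (if s \<sigma> \<le> s j then 1 else 0))))"
      by (intro sum.cong) auto
    also have "\<dots> \<le> m^2/2" by (rule lemR) (use fS in auto)
    finally show ?thesis .
  qed
  have key2: "(\<Sum>\<pi>\<in>S. \<Sum>\<sigma>\<in>S. pmf q \<sigma> * max 0 (m - p \<pi> \<sigma>)) \<le> N * (m^2/2)"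
  proof -
    have "(\<Sum>\<pi>\<in>S. \<Sum>\<sigma>\<in>S. pmf q \<sigma> * max 0 (m - p \<pi> \<sigma>))
        = (\<Sum>\<sigma>\<in>S. \<Sum>\<pi>\<in>S. pmf q \<sigma> * max 0 (m - p \<pi> \<sigma>))" by (rule sum.swap)
    also have "\<dots> = (\<Sum>\<sigma>\<in>S. \<Sum>\<rho>\<in>S. pmf q \<sigma> * max 0 (m - p (\<rho> \<circ> inv \<sigma>) \<sigma>))"
    proof (rule sum.cong[OF refl])
      fix \<sigma> assume "\<sigma> \<in> S"
      then have b: "bij_betw (\<lambda>\<rho>. \<rho> \<circ> inv \<sigma>) S S" unfolding S_def by (rule bij_rcomp)
      show "(\<Sum>\<pi>\<in>S. pmf q \<sigma> * max 0 (m - p \<pi> \<sigma>)) = (\<Sum>\<rho>\<in>S. pmf q \<sigma> * max 0 (m - p (\<rho> \<circ> inv \<sigma>) \<sigma>))"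
        using sum.reindex_bij_betw[OF b, of "\<lambda>\<pi>. pmf q \<sigma> * max 0 (m - p \<pi> \<sigma>)"] by simp
    qed
    also have "\<dots> = (\<Sum>\<rho>\<in>S. \<Sum>\<sigma>\<in>S. pmf q \<sigma> * max 0 (m - p (\<rho> \<circ> inv \<sigma>) \<sigma>))" by (rule sum.swap)
    also have "\<dots> \<le> (\<Sum>\<rho>\<in>S. m^2/2)" by (rule sum_mono) (use key1 in auto)
    also have "\<dots> = N * (m^2/2)" unfolding N_def by simp
    finally show ?thesis .
  qed
  have up: "(\<Sum>\<pi>\<in>A. F \<pi>) \<le> \<alpha> * card A"
  proof -
    have "(\<Sum>\<pi>\<in>A. F \<pi>) \<le> (\<Sum>\<pi>\<in>A. \<alpha>)" by (rule sum_mono) (simp add: A_def)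
    then show ?thesis by (simp add: mult.commute)
  qed
  have Flow: "F \<pi> \<ge> m - (\<Sum>\<sigma>\<in>S. pmf q \<sigma> * max 0 (m - p \<pi> \<sigma>))" for \<pi>
  proof -
    have "(\<Sum>\<sigma>\<in>S. pmf q \<sigma> * (m - max 0 (m - p \<pi> \<sigma>))) \<le> F \<pi>"
      unfolding F_def by (rule sum_mono) (simp add: mult_left_mono)
    moreover have "(\<Sum>\<sigma>\<in>S. pmf q \<sigma> * (m - max 0 (m - p \<pi> \<sigma>)))
        = m * (\<Sum>\<sigma>\<in>S. pmf q \<sigma>) - (\<Sum>\<sigma>\<in>S. pmf q \<sigma> * max 0 (m - p \<pi> \<sigma>))"
      by (simp add: algebra_simps sum_subtractf sum_distrib_left)
    ultimately show ?thesis using qsum by simp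
  qed
  have low: "(\<Sum>\<pi>\<in>A. F \<pi>) \<ge> m * card A - N * (m^2/2)"
  proof -
    have "(\<Sum>\<pi>\<in>A. F \<pi>) \<ge> (\<Sum>\<pi>\<in>A. m - (\<Sum>\<sigma>\<in>S. pmf q \<sigma> * max 0 (m - p \<pi> \<sigma>)))"
      by (rule sum_mono) (use Flow in auto)
    moreover have "(\<Sum>\<pi>\<in>A. m - (\<Sum>\<sigma>\<in>S. pmf q \<sigma> * max 0 (m - p \<pi> \<sigma>)))
        = m * card A - (\<Sum>\<pi>\<in>A. \<Sum>\<sigma>\<in>S. pmf q \<sigma> * max 0 (m - p \<pi> \<sigma>))"
      by (simp add: sum_subtractf)
    moreover have "(\<Sum>\<pi>\<in>A. \<Sum>\<sigma>\<in>S. pmf q \<sigma> * max 0 (m - p \<pi> \<sigma>))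
        \<le> (\<Sum>\<pi>\<in>S. \<Sum>\<sigma>\<in>S. pmf q \<sigma> * max 0 (m - p \<pi> \<sigma>))"
      by (rule sum_mono2[OF fS fA(2)]) (auto intro!: sum_nonneg)
    ultimately show ?thesis using key2 by linarith
  qed
  have "\<alpha> * card A \<ge> m * card A - N * (m^2/2)" using up low by linarith
  moreover have "N * (m^2/2) = m * card A / 2" unfolding m_def using Npos by (simp add: power2_eq_square field_simps)
  ultimately have "\<alpha> * card A \<ge> m * card A / 2" by linarith
  then have "real (card A) \<le> 2 * \<alpha> * N"
  proof (cases "card A = 0")
    case True then show ?thesis using a0 Npos by simp
  next
    case False
    then have cp: "real (card A) > 0" using fA(1) by (simp add: card_gt_0_iff)
    have "m * card A \<le> (2 * \<alpha>) * card A" using \<open>\<alpha> * card A \<ge> m * card A / 2\<close> by simp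
    then have "m \<le> 2 * \<alpha>" using cp by (rule mult_right_le_imp_le)
    then have "\<alpha> \<ge> m / 2" by simp
    then show ?thesis unfolding m_def using Npos by (simp add: field_simps)
  qed
  then show ?thesis unfolding A_def Feq N_def S_def by simp
qed


lemma pv_meas: "(\<lambda>y. permute_vec y \<tau>) \<in> measurable (PiM UNIV (\<lambda>_. N)) (PiM UNIV (\<lambda>_. N))"
  unfolding permute_vec_def
  by (rule measurable_PiM_single') (auto simp: space_PiM PiE_def)

lemma pv_pv: "permute_vec (permute_vec x a) b = permute_vec x (a \<circ> b)"
  by (simp add: permute_vec_def)

lemma Pbar_meas:
  assumes "T \<in> borel_measurable (PiM UNIV (\<lambda>_. N))"
  shows "Pbar q T \<in> borel_measurable (PiM (UNIV::'n::finite set) (\<lambda>_. N))"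
proof -
  have "(\<lambda>y. T (permute_vec y \<tau>)) \<in> borel_measurable (PiM (UNIV::'n set) (\<lambda>_. N))" for \<tau> :: "'n \<Rightarrow> 'n"
    using measurable_comp[OF pv_meas assms] by (simp add: o_def)
  then show ?thesis unfolding Pbar_def using assms by measurable
qed


theorem theorem8:
  fixes M :: "'a measure" and N :: "'x measure"
    and X :: "'a \<Rightarrow> ('n::finite \<Rightarrow> 'x)"
    and T :: "('n \<Rightarrow> 'x) \<Rightarrow> real"
    and q :: "('n \<Rightarrow> 'n) pmf"
    and \<alpha> :: real
  assumes "prob_space M"
    and "X \<in> measurable M (PiM UNIV (\<lambda>_. N))"
    and "exchangeable M N X"
    and "T \<in> borel_measurable (PiM UNIV (\<lambda>_. N))"
    and "set_pmf q \<subseteq> perm_set"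
    and "0 \<le> \<alpha>" and "\<alpha> \<le> 1"
  shows "measure M {\<omega> \<in> space M. Pbar q T (X \<omega>) \<le> \<alpha>} \<le> 2 * \<alpha>"
proof -
  interpret prob_space M by fact
  define Sp where "Sp = PiM (UNIV :: 'n set) (\<lambda>_. N)"
  have Xm: "X \<in> measurable M Sp" using assms(2) Sp_def by simp
  have Pm: "Pbar q T \<in> borel_measurable Sp" unfolding Sp_def by (rule Pbar_meas[OF assms(4)])
  define B where "B = {y \<in> space Sp. Pbar q T y \<le> \<alpha>}"
  have Bs: "B \<in> sets Sp" unfolding B_def using Pm by measurable
  define E where "E \<pi> = {\<omega>\<in>space M. Pbar q T (permute_vec (X \<omega>) \<pi>) \<le> \<alpha>}" for \<pi>
  define P0 where "P0 = measure M {\<omega> \<in> space M. Pbar q T (X \<omega>) \<le> \<alpha>}"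
  have XPs: "(\<lambda>\<omega>. permute_vec (X \<omega>) \<pi>) \<in> measurable M Sp" for \<pi>
    using measurable_comp[OF assms(2) pv_meas[of \<pi> N]] unfolding Sp_def by (simp add: o_def)
  have Eeq: "E \<pi> = (\<lambda>\<omega>. permute_vec (X \<omega>) \<pi>) -` B \<inter> space M" for \<pi>
    using measurable_space[OF XPs] by (auto simp: E_def B_def)
  have E0: "{\<omega> \<in> space M. Pbar q T (X \<omega>) \<le> \<alpha>} = X -` B \<inter> space M"
    using measurable_space[OF Xm] by (auto simp: B_def)
  have Es: "E \<pi> \<in> sets M" for \<pi> unfolding Eeq by (rule measurable_sets[OF XPs Bs])
  have Em: "measure M (E \<pi>) = P0" if "\<pi> \<in> perm_set" for \<pi>
  proof -
    have d: "distr M Sp (\<lambda>\<omega>. permute_vec (X \<omega>) \<pi>) = distr M Sp X"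
      using assms(3) that unfolding exchangeable_def Sp_def by blast
    have "measure M (E \<pi>) = measure (distr M Sp (\<lambda>\<omega>. permute_vec (X \<omega>) \<pi>)) B"
      unfolding Eeq by (rule measure_distr[OF XPs Bs, symmetric])
    also have "\<dots> = measure (distr M Sp X) B" using d by simp
    also have "\<dots> = P0" unfolding P0_def E0 by (rule measure_distr[OF Xm Bs])
    finally show ?thesis .
  qed
  have Ei: "integrable M (indicator (E \<pi>) :: 'a \<Rightarrow> real)" for \<pi>
    by (rule integrable_real_indicator[OF Es]) (simp add: less_top[symmetric])
  have fP: "finite (perm_set :: ('n \<Rightarrow> 'n) set)" by (rule finite_subset[OF subset_UNIV]) simp
  have idS: "id \<in> (perm_set :: ('n \<Rightarrow> 'n) set)" unfolding perm_set_def by (simp add: permutes_id)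
  have "card (perm_set :: ('n \<Rightarrow> 'n) set) > 0" using fP idS by (auto simp: card_gt_0_iff)
  then have Npos: "real (card (perm_set :: ('n \<Rightarrow> 'n) set)) > 0" by simp
  have "real (card (perm_set :: ('n \<Rightarrow> 'n) set)) * P0 = (\<Sum>\<pi>\<in>perm_set. measure M (E \<pi>))"
    using Em by simp
  also have "\<dots> = (\<Sum>\<pi>\<in>perm_set. integral\<^sup>L M (indicator (E \<pi>)))"
  proof (rule sum.cong[OF refl])
    fix \<pi> :: "'n \<Rightarrow> 'n"
    have "E \<pi> \<subseteq> space M" by (simp add: E_def)
    then show "measure M (E \<pi>) = integral\<^sup>L M (indicator (E \<pi>))"
      by (simp add: Int_absorb2)
  qed
  also have "\<dots> = integral\<^sup>L M (\<lambda>\<omega>. \<Sum>\<pi>\<in>perm_set. indicator (E \<pi>) \<omega>)"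
    by (rule Bochner_Integration.integral_sum[symmetric]) (use Ei in auto)
  also have "\<dots> \<le> 2 * \<alpha> * real (card (perm_set :: ('n \<Rightarrow> 'n) set))"
  proof (rule integral_le_const)
    show "integrable M (\<lambda>\<omega>. \<Sum>\<pi>\<in>perm_set. indicator (E \<pi>) \<omega> :: real)"
      using Ei by auto
    show "AE \<omega> in M. (\<Sum>\<pi>\<in>perm_set. indicator (E \<pi>) \<omega> :: real) \<le> 2 * \<alpha> * real (card (perm_set :: ('n \<Rightarrow> 'n) set))"
    proof (rule AE_I2)
      fix \<omega> assume \<omega>: "\<omega> \<in> space M"
      define x where "x = X \<omega>"
      have "(\<Sum>\<pi>\<in>perm_set. indicator (E \<pi>) \<omega> :: real)
          = (\<Sum>\<pi>\<in>perm_set. if Pbar q T (permute_vec x \<pi>) \<le> \<alpha> then 1 else 0)"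
        using \<omega> by (intro sum.cong) (auto simp: E_def x_def indicator_def)
      also have "\<dots> = real (card {\<pi>\<in>perm_set. Pbar q T (permute_vec x \<pi>) \<le> \<alpha>})"
        using fP by (simp add: sum.inter_filter[symmetric])
      also have "{\<pi>\<in>perm_set. Pbar q T (permute_vec x \<pi>) \<le> \<alpha>}
        = {\<pi>\<in>perm_set. (\<Sum>\<sigma>\<in>perm_set. \<Sum>\<sigma>\<^sub>0\<in>perm_set. pmf q \<sigma> * pmf q \<sigma>\<^sub>0 *
            (if (\<lambda>\<rho>. T (permute_vec x \<rho>)) (\<pi> \<circ> (\<sigma> \<circ> inv \<sigma>\<^sub>0)) \<ge> (\<lambda>\<rho>. T (permute_vec x \<rho>)) \<pi> then 1 else 0)) \<le> \<alpha>}"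
        by (simp add: Pbar_def pv_pv)
      also have "real (card \<dots>) \<le> 2 * \<alpha> * real (card (perm_set :: ('n \<Rightarrow> 'n) set))"
        by (rule lemD[OF assms(5) assms(6)])
      finally show "(\<Sum>\<pi>\<in>perm_set. indicator (E \<pi>) \<omega> :: real) \<le> 2 * \<alpha> * real (card (perm_set :: ('n \<Rightarrow> 'n) set))" .
    qed
  qed
  finally have "real (card (perm_set :: ('n \<Rightarrow> 'n) set)) * P0 \<le> 2 * \<alpha> * real (card (perm_set :: ('n \<Rightarrow> 'n) set))" .
  then have "P0 \<le> 2 * \<alpha>" using Npos by (simp add: mult.commute[of _ "real (card _)"])
  then show ?thesis unfolding P0_def .
qed

end
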